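(* Let $P$ be any of cost-SR, cost-PR, cost-SPR, cost-LPR, cost-BC. The system MaxSAT resolution $+$ $P$ is complete: for every MaxSAT instance with satisfiable hard clauses $H_0=\{C_1\lor b_1,\dots,C_m\lor b_m\}$ and soft clauses $S_0=\{\lnot b_1,\dots,\lnot b_m\}$ and with $\mathrm{cost}(H_0)=k$, there is a MaxSAT resolution $+$ $P$ derivation $(H_0,S_0),\dots,(H_t,S_t)$ such that $S_t$ contains $k$ copies of the empty clause $\bot$.
   Context: $b_1,\dots,b_m$ are distinct blocking variables not occurring in $C_1,\dots,C_m$; $\mathrm{cost}(\alpha)=\sum_i\alpha(b_i)$, $\mathrm{cost}(H)=\min\{\mathrm{cost}(\alpha):\alpha\text{ total},\alpha\models H\}$. Notation: substitutions map variables to $0,1$ or literals; $(\sigma\circ\tau)(x)=\sigma(\tau(x))$; $C{\upharpoonright}_\sigma$ and $\Gamma{\upharpoonright}_\sigma$ denote restriction (clauses set to $1$ removed); $\lnot C$ is the partial assignment falsifying $C$; $\Gamma\vdash_1 C$ means unit propagation on $\Gamma{\upharpoonright}_{\lnot C}$ derives $\bot$. $C$ is cost-SR w.r.t. $\Gamma$ if some substitution $\sigma$ satisfies (1) $\Gamma{\upharpoonright}_{\lnot C}\vdash_1(\Gamma\cup\{C\}){\upharpoonright}_\sigma$ and (2) $\mathrm{cost}(\tau\circ\sigma)\le\mathrm{cost}(\tau)$ for all total $\tau\supseteq\lnot C$; cost-PR if $\sigma$ can be a partial assignment; cost-SPR if a partial assignment with the same domain as $\lnot C$; cost-LPR if moreover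 it differs from $\lnot C$ on exactly one variable. $C\lor\ell$ is cost-BC w.r.t. $\Gamma$ if for every $D\lor\lnot\ell\in\Gamma$, $C\lor D$ is a tautology, and $\ell$ is not a positive blocking variable. A MaxSAT resolution $+$ $P$ derivation is a sequence of pairs of multisets $(H_i,S_i)$ where each step is one of: (a) $S_i=S_{i-1}$, $H_i=H_{i-1}\cup\{C\}$ with $C$ obtained by resolution (or weakening) from $H_{i-1}$; (a') $S_i=S_{i-1}$, $H_i=H_{i-1}\cup\{C\}$ with $C$ satisfying $P$ w.r.t. $H_{i-1}$; (b) $S_i=S_{i-1}\cup\{C\}$ for some $C\in H_{i-1}$, $H_i=H_{i-1}$; (c) $S_i=S_{i-1}\setminus\{C\}\cup\{C\lor x,C\lor\lnot x\}$ for $C\in S_{i-1}$, $H_i=H_{i-1}$; (d) $S_i=S_{i-1}\setminus\{C\lor x,C\lor\lnot x\}\cup\{C\}$ for $\{C\lor x,C\lor\lnot x\}\subseteq S_{i-1}$, $H_i=H_{i-1}$. *)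

theory Defs
  imports Main "HOL-Library.Multiset"
begin

datatype 'v lit = Pos 'v | Neg 'v

fun var :: "'v lit \<Rightarrow> 'v" where
  "var (Pos x) = x" | "var (Neg x) = x"

fun negate :: "'v lit \<Rightarrow> 'v lit" where
  "negate (Pos x) = Neg x" | "negate (Neg x) = Pos x"

type_synonym 'v clause = "'v lit set"

definition tautology :: "'v clause \<Rightarrow> bool" where
  "tautology C \<longleftrightarrow> (\<exists>x. Pos x \<in> C \<and> Neg x \<in> C)"

fun lit_val :: "('v \<Rightarrow> bool) \<Rightarrow> 'v lit \<Rightarrow> bool" where
  "lit_val \<alpha> (Pos x) = \<alpha> x" | "lit_val \<alpha> (Neg x) = (\<not> \<alpha> x)"

definition sat_clause :: "('v \<Rightarrow> bool) \<Rightarrow> 'v clause \<Rightarrow> bool" where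
  "sat_clause \<alpha> C \<longleftrightarrow> (\<exists>l\<in>C. lit_val \<alpha> l)"

definition sat_set :: "('v \<Rightarrow> bool) \<Rightarrow> 'v clause set \<Rightarrow> bool" where
  "sat_set \<alpha> \<Gamma> \<longleftrightarrow> (\<forall>C\<in>\<Gamma>. sat_clause \<alpha> C)"

text \<open>cost(alpha) = number of blocking variables set to 1 (B = {b_1,...,b_m}, distinct).\<close>
definition cost :: "'v set \<Rightarrow> ('v \<Rightarrow> bool) \<Rightarrow> nat" where
  "cost B \<alpha> = card {b\<in>B. \<alpha> b}"

definition cost_set :: "'v set \<Rightarrow> 'v clause set \<Rightarrow> nat" where
  "cost_set B H = (LEAST c. \<exists>\<alpha>. sat_set \<alpha> H \<and> cost B \<alpha> = c)"

text \<open>A substitution maps each variable to a constant or to a literal;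
  the identity on x is Lit (Pos x).\<close>
datatype 'v sval = Const bool | Lit "'v lit"

fun neg_sval :: "'v sval \<Rightarrow> 'v sval" where
  "neg_sval (Const b) = Const (\<not> b)" | "neg_sval (Lit l) = Lit (negate l)"

type_synonym 'v subst = "'v \<Rightarrow> 'v sval"

fun subst_lit :: "'v subst \<Rightarrow> 'v lit \<Rightarrow> 'v sval" where
  "subst_lit \<sigma> (Pos x) = \<sigma> x" | "subst_lit \<sigma> (Neg x) = neg_sval (\<sigma> x)"

definition is_partial_assignment :: "'v subst \<Rightarrow> bool" where
  "is_partial_assignment \<sigma> \<longleftrightarrow> (\<forall>x. \<sigma> x = Lit (Pos x) \<or> (\<exists>b. \<sigma> x = Const b))"

definition sdom :: "'v subst \<Rightarrow> 'v set" where
  "sdom \<sigma> = {x. \<sigma> x \<noteq> Lit (Pos x)}"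

definition neg_clause :: "'v clause \<Rightarrow> 'v subst" where
  "neg_clause C x = (if Pos x \<in> C then Const False else if Neg x \<in> C then Const True
                     else Lit (Pos x))"

definition lit_assign :: "'v lit \<Rightarrow> 'v subst" where
  "lit_assign l x = (if x = var l then Const (l = Pos x) else Lit (Pos x))"

definition comp_total :: "('v \<Rightarrow> bool) \<Rightarrow> 'v subst \<Rightarrow> ('v \<Rightarrow> bool)" where
  "comp_total \<tau> \<sigma> x = (case \<sigma> x of Const b \<Rightarrow> b | Lit l \<Rightarrow> lit_val \<tau> l)"

definition extends :: "('v \<Rightarrow> bool) \<Rightarrow> 'v subst \<Rightarrow> bool" where
  "extends \<tau> \<rho> \<longleftrightarrow> (\<forall>x b. \<rho> x = Const b \<longrightarrow> \<tau> x = b)"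

definition clause_true_under :: "'v subst \<Rightarrow> 'v clause \<Rightarrow> bool" where
  "clause_true_under \<sigma> C \<longleftrightarrow> (\<exists>l\<in>C. subst_lit \<sigma> l = Const True)"

definition restrict_clause :: "'v subst \<Rightarrow> 'v clause \<Rightarrow> 'v clause" where
  "restrict_clause \<sigma> C = {l'. \<exists>l\<in>C. subst_lit \<sigma> l = Lit l'}"

definition restrict_set :: "'v subst \<Rightarrow> 'v clause set \<Rightarrow> 'v clause set" where
  "restrict_set \<sigma> \<Gamma> = restrict_clause \<sigma> ` {C\<in>\<Gamma>. \<not> clause_true_under \<sigma> C}"

inductive up_refutes :: "'v clause set \<Rightarrow> bool" where
  empty: "{} \<in> F \<Longrightarrow> up_refutes F"
| unit: "{l} \<in> F \<Longrightarrow> up_refutes (restrict_set (lit_assign l) F) \<Longrightarrow> up_refutes F"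

definition up_implies :: "'v clause set \<Rightarrow> 'v clause \<Rightarrow> bool" where
  "up_implies F D \<longleftrightarrow> up_refutes (restrict_set (neg_clause D) F)"

definition sr_cond :: "'v set \<Rightarrow> 'v clause set \<Rightarrow> 'v clause \<Rightarrow> 'v subst \<Rightarrow> bool" where
  "sr_cond B \<Gamma> C \<sigma> \<longleftrightarrow>
     (\<forall>D\<in>restrict_set \<sigma> (insert C \<Gamma>). up_implies (restrict_set (neg_clause C) \<Gamma>) D)
   \<and> (\<forall>\<tau>. extends \<tau> (neg_clause C) \<longrightarrow> cost B (comp_total \<tau> \<sigma>) \<le> cost B \<tau>)"

definition cost_SR :: "'v set \<Rightarrow> 'v clause set \<Rightarrow> 'v clause \<Rightarrow> bool" where
  "cost_SR B \<Gamma> C \<longleftrightarrow> (\<exists>\<sigma>. sr_cond B \<Gamma> C \<sigma>)"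

definition cost_PR :: "'v set \<Rightarrow> 'v clause set \<Rightarrow> 'v clause \<Rightarrow> bool" where
  "cost_PR B \<Gamma> C \<longleftrightarrow> (\<exists>\<sigma>. is_partial_assignment \<sigma> \<and> sr_cond B \<Gamma> C \<sigma>)"

definition cost_SPR :: "'v set \<Rightarrow> 'v clause set \<Rightarrow> 'v clause \<Rightarrow> bool" where
  "cost_SPR B \<Gamma> C \<longleftrightarrow> (\<exists>\<sigma>. is_partial_assignment \<sigma> \<and> sdom \<sigma> = sdom (neg_clause C)
                              \<and> sr_cond B \<Gamma> C \<sigma>)"

definition cost_LPR :: "'v set \<Rightarrow> 'v clause set \<Rightarrow> 'v clause \<Rightarrow> bool" where
  "cost_LPR B \<Gamma> C \<longleftrightarrow> (\<exists>\<sigma>. is_partial_assignment \<sigma> \<and> sdom \<sigma> = sdom (neg_clause C)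
                              \<and> (\<exists>!x. \<sigma> x \<noteq> neg_clause C x) \<and> sr_cond B \<Gamma> C \<sigma>)"

definition cost_BC :: "'v set \<Rightarrow> 'v clause set \<Rightarrow> 'v clause \<Rightarrow> bool" where
  "cost_BC B \<Gamma> E \<longleftrightarrow> (\<exists>l\<in>E.
     (\<forall>D'\<in>\<Gamma>. negate l \<in> D' \<longrightarrow> tautology ((E - {l}) \<union> (D' - {negate l})))
     \<and> (\<forall>b\<in>B. l \<noteq> Pos b))"

datatype redundancy = SR | PR | SPR | LPR | BC

fun redundant :: "redundancy \<Rightarrow> 'v set \<Rightarrow> 'v clause set \<Rightarrow> 'v clause \<Rightarrow> bool" where
  "redundant SR = cost_SR" | "redundant PR = cost_PR" | "redundant SPR = cost_SPR"
| "redundant LPR = cost_LPR" | "redundant BC = cost_BC"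

definition resolvent_from :: "'v clause multiset \<Rightarrow> 'v clause \<Rightarrow> bool" where
  "resolvent_from H C \<longleftrightarrow> (\<exists>C1 C2 x. C1 \<in># H \<and> C2 \<in># H \<and> Pos x \<in> C1 \<and> Neg x \<in> C2
                             \<and> C = (C1 - {Pos x}) \<union> (C2 - {Neg x}))"

definition weakening_from :: "'v clause multiset \<Rightarrow> 'v clause \<Rightarrow> bool" where
  "weakening_from H C \<longleftrightarrow> finite C \<and> (\<exists>C1. C1 \<in># H \<and> C1 \<subseteq> C)"

definition var_in :: "'v \<Rightarrow> 'v clause \<Rightarrow> bool" where
  "var_in x C \<longleftrightarrow> Pos x \<in> C \<or> Neg x \<in> C"

type_synonym 'v state = "'v clause multiset \<times> 'v clause multiset"

definition deriv_step :: "redundancy \<Rightarrow> 'v set \<Rightarrow> 'v state \<Rightarrow> 'v state \<Rightarrow> bool" where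
  "deriv_step P B st st' \<longleftrightarrow> (let (H, S) = st; (H', S') = st' in
      (S' = S \<and> (\<exists>C. H' = add_mset C H \<and> (resolvent_from H C \<or> weakening_from H C)))
    \<or> (S' = S \<and> (\<exists>C. H' = add_mset C H \<and> finite C \<and> redundant P B (set_mset H) C))
    \<or> (H' = H \<and> (\<exists>C. C \<in># H \<and> S' = add_mset C S))
    \<or> (H' = H \<and> (\<exists>C x. C \<in># S \<and> \<not> var_in x C
          \<and> S' = (S - {#C#}) + {#insert (Pos x) C, insert (Neg x) C#}))
    \<or> (H' = H \<and> (\<exists>C x. \<not> var_in x C \<and> {#insert (Pos x) C, insert (Neg x) C#} \<subseteq># S
          \<and> S' = add_mset C (S - {#insert (Pos x) C, insert (Neg x) C#}))))"

definition is_derivation :: "redundancy \<Rightarrow> 'v set \<Rightarrow> 'v state list \<Rightarrow> bool" where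
  "is_derivation P B ds \<longleftrightarrow> ds \<noteq> [] \<and> (\<forall>i. Suc i < length ds \<longrightarrow> deriv_step P B (ds ! i) (ds ! Suc i))"

definition hard0 :: "'v clause list \<Rightarrow> 'v list \<Rightarrow> 'v clause multiset" where
  "hard0 Cs bs = mset (map2 (\<lambda>C b. insert (Pos b) C) Cs bs)"

definition soft0 :: "'v list \<Rightarrow> 'v clause multiset" where
  "soft0 bs = mset (map (\<lambda>b. {Neg b}) bs)"

end

theory Submission
  imports Defs
begin



definition reach :: "redundancy \<Rightarrow> 'v set \<Rightarrow> 'v state \<Rightarrow> 'v state \<Rightarrow> bool" where
  "reach P B = (deriv_step P B)\<^sup>*\<^sup>*"

lemma reach_refl: "reach P B x x" by (simp add: reach_def)
lemma reach_trans: "reach P B x y \<Longrightarrow> reach P B y z \<Longrightarrow> reach P B x z"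
  unfolding reach_def by (rule rtranclp_trans)
lemma reach_step: "deriv_step P B x y \<Longrightarrow> reach P B x y"
  unfolding reach_def by (rule r_into_rtranclp)
lemma reach_eq: "reach P B x y \<Longrightarrow> y = z \<Longrightarrow> reach P B x z" by simp

lemma ds_iff: "deriv_step P B (H,S) (H',S') \<longleftrightarrow>
   ((S' = S \<and> (\<exists>C. H' = add_mset C H \<and> (resolvent_from H C \<or> weakening_from H C)))
    \<or> (S' = S \<and> (\<exists>C. H' = add_mset C H \<and> finite C \<and> redundant P B (set_mset H) C))
    \<or> (H' = H \<and> (\<exists>C. C \<in># H \<and> S' = add_mset C S))
    \<or> (H' = H \<and> (\<exists>C x. C \<in># S \<and> \<not> var_in x C
          \<and> S' = (S - {#C#}) + {#insert (Pos x) C, insert (Neg x) C#}))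
    \<or> (H' = H \<and> (\<exists>C x. \<not> var_in x C \<and> {#insert (Pos x) C, insert (Neg x) C#} \<subseteq># S
          \<and> S' = add_mset C (S - {#insert (Pos x) C, insert (Neg x) C#}))))"
  by (simp add: deriv_step_def)




lemma step_res: "resolvent_from H C \<Longrightarrow> deriv_step P B (H,S) (add_mset C H, S)"
  unfolding ds_iff by blast
lemma step_weak: "weakening_from H C \<Longrightarrow> deriv_step P B (H,S) (add_mset C H, S)"
  unfolding ds_iff by blast
lemma step_b: "C \<in># H \<Longrightarrow> deriv_step P B (H,S) (H, add_mset C S)"
  unfolding ds_iff by blast
lemma step_c: "\<not> var_in x C \<Longrightarrow>
   deriv_step P B (H, add_mset C S) (H, S + {#insert (Pos x) C, insert (Neg x) C#})"
  unfolding ds_iff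
  apply (rule disjI2, rule disjI2, rule disjI2, rule disjI1, rule conjI, rule refl)
  apply (rule exI[of _ C], rule exI[of _ x])
  by simp
lemma step_d: "\<not> var_in x C \<Longrightarrow>
   deriv_step P B (H, S + {#insert (Pos x) C, insert (Neg x) C#}) (H, add_mset C S)"
  unfolding ds_iff
  apply (rule disjI2, rule disjI2, rule disjI2, rule disjI2, rule conjI, rule refl)
  apply (rule exI[of _ C], rule exI[of _ x])
  by simp




lemma step_ctx:
  assumes "deriv_step P B (H,S) (H',S')"
  shows "deriv_step P B (H, T + S) (H', T + S')"
proof -
  note a = assms[unfolded ds_iff]
  show ?thesis using a
proof (elim disjE exE conjE)
  fix C x assume h: "H' = H" "C \<in># S" "\<not> var_in x C"
    "S' = (S - {#C#}) + {#insert (Pos x) C, insert (Neg x) C#}"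
  have "T + S - {#C#} = T + (S - {#C#})"
    by (rule diff_union_single_conv[OF h(2)])
  then have "T + S' = (T + S - {#C#}) + {#insert (Pos x) C, insert (Neg x) C#}"
    using h(4) by (simp add: add.assoc)
  moreover have "C \<in># T + S" using h(2) by simp
  ultimately show ?thesis unfolding ds_iff using h(1,3) by blast
next
  fix C x assume h: "H' = H" "\<not> var_in x C" "{#insert (Pos x) C, insert (Neg x) C#} \<subseteq># S"
    "S' = add_mset C (S - {#insert (Pos x) C, insert (Neg x) C#})"
  have e: "T + S - {#insert (Pos x) C, insert (Neg x) C#} = T + (S - {#insert (Pos x) C, insert (Neg x) C#})"
    by (rule multiset_diff_union_assoc[OF h(3)])
  have "{#insert (Pos x) C, insert (Neg x) C#} \<subseteq># T + S"
    using h(3) mset_subset_eq_add_right subset_mset.order_trans by blast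
  moreover have "T + S' = add_mset C (T + S - {#insert (Pos x) C, insert (Neg x) C#})"
    using h(4) e by simp
  ultimately show ?thesis unfolding ds_iff using h(1,2) by blast
next
  fix C assume h: "H' = H" "C \<in># H" "S' = add_mset C S"
  then show ?thesis unfolding ds_iff by simp
qed (auto simp: ds_iff)
qed




lemma reach_ctx:
  "reach P B st st' \<Longrightarrow> reach P B (fst st, T + snd st) (fst st', T + snd st')"
  unfolding reach_def
proof (induction rule: rtranclp_induct)
  case base then show ?case by simp
next
  case (step y z)
  have "deriv_step P B (fst y, T + snd y) (fst z, T + snd z)"
    using step_ctx[of P B "fst y" "snd y" "fst z" "snd z" T] step(2) by simp
  then show ?case using step(3) by (meson rtranclp.rtrancl_into_rtrancl)
qed

lemma reach_ctx': "reach P B (H,S) (H',S') \<Longrightarrow> reach P B (H, T + S) (H', T + S')"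
  using reach_ctx[of P B "(H,S)" "(H',S')" T] by simp

lemma reach_list:
  "reach P B x y \<Longrightarrow> \<exists>ds. is_derivation P B ds \<and> hd ds = x \<and> last ds = y"
  unfolding reach_def
proof (induction rule: rtranclp_induct)
  case base
  then show ?case by (intro exI[of _ "[x]"]) (simp add: is_derivation_def)
next
  case (step y z)
  then obtain ds where d: "is_derivation P B ds" "hd ds = x" "last ds = y" by blast
  have ne: "ds \<noteq> []" using d(1) by (simp add: is_derivation_def)
  have "is_derivation P B (ds @ [z])"
    unfolding is_derivation_def
  proof (intro conjI allI impI)
    fix i assume i: "Suc i < length (ds @ [z])"
    show "deriv_step P B ((ds @ [z]) ! i) ((ds @ [z]) ! Suc i)"
    proof (cases "Suc i < length ds")
      case True then show ?thesis using d(1) by (simp add: is_derivation_def nth_append)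
    next
      case False
      then have "i = length ds - 1" "Suc i = length ds" using i by auto
      then show ?thesis using ne d(3) step(2) by (simp add: nth_append last_conv_nth)
    qed
  qed simp
  then show ?case using d ne by (intro exI[of _ "ds @ [z]"]) simp
qed





inductive der :: "'v clause set \<Rightarrow> 'v clause \<Rightarrow> bool" for F where
  base: "C \<in> F \<Longrightarrow> der F C"
| res: "der F C1 \<Longrightarrow> der F C2 \<Longrightarrow> Pos x \<in> C1 \<Longrightarrow> Neg x \<in> C2
        \<Longrightarrow> der F ((C1 - {Pos x}) \<union> (C2 - {Neg x}))"

lemma complete_aux:
  fixes F :: "'v clause set"
  assumes fV: "finite V" and V: "V = (\<Union>C\<in>F. var ` C)"
  shows "\<not> tautology D \<Longrightarrow> (\<forall>\<alpha>. sat_set \<alpha> F \<longrightarrow> sat_clause \<alpha> D)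
         \<Longrightarrow> \<exists>C. der F C \<and> C \<subseteq> D"
proof (induction "card (V - var ` D)" arbitrary: D rule: less_induct)
  case less
  show ?case
  proof (cases "V \<subseteq> var ` D")
    case True
    define \<alpha> where "\<alpha> x = (Neg x \<in> D)" for x
    have nd: "\<not> sat_clause \<alpha> D"
    proof
      assume "sat_clause \<alpha> D"
      then obtain l where l: "l \<in> D" "lit_val \<alpha> l" unfolding sat_clause_def by blast
      show False
      proof (cases l)
        case (Pos x) then show False using l less(2) by (auto simp: \<alpha>_def tautology_def)
      next
        case (Neg x) then show False using l by (auto simp: \<alpha>_def)
      qed
    qed
    then obtain C where C: "C \<in> F" "\<not> sat_clause \<alpha> C"
      using less(3) unfolding sat_set_def by blast
    have "C \<subseteq> D"
    proof
      fix l assume l: "l \<in> C"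
      then have nl: "\<not> lit_val \<alpha> l" using C(2) unfolding sat_clause_def by blast
      have "var l \<in> V" using l C(1) V by blast
      then have "var l \<in> var ` D" using True by blast
      then obtain l' where l': "l' \<in> D" "var l' = var l" by auto
      show "l \<in> D"
      proof (cases l)
        case (Pos x)
        then have "Neg x \<notin> D" using nl by (simp add: \<alpha>_def)
        then show ?thesis using l' Pos by (cases l') auto
      next
        case (Neg x)
        then show ?thesis using nl by (simp add: \<alpha>_def)
      qed
    qed
    then show ?thesis using C(1) der.base by blast
  next
    case False
    then obtain x where x: "x \<in> V" "x \<notin> var ` D" by blast
    define D1 where "D1 = insert (Pos x) D"
    define D2 where "D2 = insert (Neg x) D"
    have pD: "Pos x \<notin> D" "Neg x \<notin> D" using x(2) by (metis image_eqI var.simps)+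
    have t1: "\<not> tautology D1" using less(2) pD unfolding D1_def tautology_def by auto
    have t2: "\<not> tautology D2" using less(2) pD unfolding D2_def tautology_def by auto
    have s1: "\<forall>\<alpha>. sat_set \<alpha> F \<longrightarrow> sat_clause \<alpha> D1"
      using less(3) unfolding D1_def sat_clause_def by blast
    have s2: "\<forall>\<alpha>. sat_set \<alpha> F \<longrightarrow> sat_clause \<alpha> D2"
      using less(3) unfolding D2_def sat_clause_def by blast
    have v1: "var ` D1 = insert x (var ` D)" unfolding D1_def by simp
    have v2: "var ` D2 = insert x (var ` D)" unfolding D2_def by simp
    have lt: "card (V - insert x (var ` D)) < card (V - var ` D)"
    proof -
      have e: "V - insert x (var ` D) = (V - var ` D) - {x}" by blast
      have m: "x \<in> V - var ` D" using x by blast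
      have f: "finite (V - var ` D)" using fV by simp
      show ?thesis unfolding e by (rule card_Diff1_less[OF f m])
    qed
    obtain C1 where C1: "der F C1" "C1 \<subseteq> D1" using less(1)[OF _ t1 s1] lt v1 by auto
    obtain C2 where C2: "der F C2" "C2 \<subseteq> D2" using less(1)[OF _ t2 s2] lt v2 by auto
    show ?thesis
    proof (cases "Pos x \<in> C1")
      case False then show ?thesis using C1 unfolding D1_def by blast
    next
      case p1: True
      show ?thesis
      proof (cases "Neg x \<in> C2")
        case False then show ?thesis using C2 unfolding D2_def by blast
      next
        case True
        have "der F ((C1 - {Pos x}) \<union> (C2 - {Neg x}))" using der.res[OF C1(1) C2(1) p1 True] .
        moreover have "(C1 - {Pos x}) \<union> (C2 - {Neg x}) \<subseteq> D"
          using C1(2) C2(2) unfolding D1_def D2_def by blast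
        ultimately show ?thesis by blast
      qed
    qed
  qed
qed

lemma complete:
  fixes F :: "'v clause set"
  assumes "finite F" "\<forall>C\<in>F. finite C" "\<not> tautology D"
    "\<forall>\<alpha>. sat_set \<alpha> F \<longrightarrow> sat_clause \<alpha> D"
  shows "\<exists>C. der F C \<and> C \<subseteq> D"
proof -
  have "finite (\<Union>C\<in>F. var ` C)" using assms(1,2) by auto
  then show ?thesis using complete_aux[OF _ refl, of F D] assms(3,4) by blast
qed

lemma sub_add: "H \<subseteq># add_mset x H"
  by (simp add: subset_mset.le_add_same_cancel1)

lemma der_reach:
  "der F C \<Longrightarrow> F \<subseteq> set_mset H \<Longrightarrow>
    \<exists>H'. reach P B (H,S) (H',S) \<and> H \<subseteq># H' \<and> C \<in># H'"
proof (induction arbitrary: H rule: der.induct)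
  case (base C)
  then show ?case using reach_refl by blast
next
  case (res C1 C2 x)
  obtain H1 where h1: "reach P B (H,S) (H1,S)" "H \<subseteq># H1" "C1 \<in># H1" using res.IH(1) res.prems by blast
  have "F \<subseteq> set_mset H1" using res.prems h1(2) set_mset_mono by blast
  then obtain H2 where h2: "reach P B (H1,S) (H2,S)" "H1 \<subseteq># H2" "C2 \<in># H2" using res.IH(2) by blast
  have c1: "C1 \<in># H2" using h1(3) h2(2) by (meson mset_subset_eqD)
  let ?R = "(C1 - {Pos x}) \<union> (C2 - {Neg x})"
  have "resolvent_from H2 ?R" unfolding resolvent_from_def using c1 h2(3) res.hyps by blast
  then have "reach P B (H2,S) (add_mset ?R H2, S)" by (rule reach_step[OF step_res])
  moreover have "H \<subseteq># add_mset ?R H2"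
    using subset_mset.order_trans[OF subset_mset.order_trans[OF h1(2) h2(2)] sub_add] .
  ultimately show ?case using h1(1) h2(1) reach_trans by (metis union_single_eq_member)
qed

lemma getQ:
  "finite Q \<Longrightarrow> \<forall>D\<in>Q. finite D \<and> (\<exists>C. der F C \<and> C \<subseteq> D) \<Longrightarrow> F \<subseteq> set_mset H \<Longrightarrow>
   \<exists>H'. reach P B (H,S) (H',S) \<and> H \<subseteq># H' \<and> (\<forall>D\<in>Q. D \<in># H')"
proof (induction Q arbitrary: H rule: finite_induct)
  case empty
  then show ?case using reach_refl by blast
next
  case (insert D Q)
  then obtain C where C: "der F C" "C \<subseteq> D" "finite D" by blast
  obtain H1 where h1: "reach P B (H,S) (H1,S)" "H \<subseteq># H1" "C \<in># H1"
    using der_reach[OF C(1) insert.prems(2)] by blast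
  have "weakening_from H1 D" unfolding weakening_from_def using C h1(3) by blast
  then have r2: "reach P B (H1,S) (add_mset D H1, S)" by (rule reach_step[OF step_weak])
  have "F \<subseteq> set_mset (add_mset D H1)" using insert.prems(2) h1(2) set_mset_mono by fastforce
  then obtain H3 where h3: "reach P B (add_mset D H1,S) (H3,S)" "add_mset D H1 \<subseteq># H3" "\<forall>D\<in>Q. D \<in># H3"
    using insert.IH insert.prems(1) by blast
  have "D \<in># H3" using h3(2) by (meson mset_subset_eqD union_single_eq_member)
  moreover have "H \<subseteq># H3" using subset_mset.order_trans[OF subset_mset.order_trans[OF h1(2) sub_add] h3(2)] .
  ultimately show ?case using h1(1) r2 h3 reach_trans by blast
qed




lemma reach_eq2: "reach P B x y \<Longrightarrow> x' = x \<Longrightarrow> y = y' \<Longrightarrow> reach P B x' y'" by simp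

lemma addcopies: "C \<in># H \<Longrightarrow> reach P B (H,S) (H, S + replicate_mset n C)"
proof (induction n)
  case 0 then show ?case using reach_refl by simp
next
  case (Suc n)
  have "reach P B (H, S + replicate_mset n C) (H, add_mset C (S + replicate_mset n C))"
    by (rule reach_step[OF step_b[OF Suc.prems]])
  then show ?case using Suc reach_trans by fastforce
qed

lemma splitall:
  "\<forall>z\<in>set zs. \<not> var_in y (f z) \<Longrightarrow>
   reach P B (H, T + mset (map f zs))
     (H, T + mset (map (\<lambda>z. insert (Pos y) (f z)) zs) + mset (map (\<lambda>z. insert (Neg y) (f z)) zs))"
proof (induction zs arbitrary: T)
  case Nil then show ?case using reach_refl by simp
next
  case (Cons z zs)
  have "reach P B (H, add_mset (f z) (T + mset (map f zs)))
     (H, (T + mset (map f zs)) + {#insert (Pos y) (f z), insert (Neg y) (f z)#})"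
    using Cons.prems by (intro reach_step step_c) simp
  moreover have "reach P B (H, (T + {#insert (Pos y) (f z), insert (Neg y) (f z)#}) + mset (map f zs))
     (H, (T + {#insert (Pos y) (f z), insert (Neg y) (f z)#}) + mset (map (\<lambda>z. insert (Pos y) (f z)) zs) + mset (map (\<lambda>z. insert (Neg y) (f z)) zs))"
    by (rule Cons.IH) (use Cons.prems in simp)
  moreover have "T + mset (map f (z # zs)) = add_mset (f z) (T + mset (map f zs))" by simp
  moreover have "(T + mset (map f zs)) + {#insert (Pos y) (f z), insert (Neg y) (f z)#}
     = (T + {#insert (Pos y) (f z), insert (Neg y) (f z)#}) + mset (map f zs)" by (simp add: ac_simps)
  moreover have "(T + {#insert (Pos y) (f z), insert (Neg y) (f z)#}) + mset (map (\<lambda>z. insert (Pos y) (f z)) zs) + mset (map (\<lambda>z. insert (Neg y) (f z)) zs)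
     = T + mset (map (\<lambda>z. insert (Pos y) (f z)) (z # zs)) + mset (map (\<lambda>z. insert (Neg y) (f z)) (z # zs))"
    by (simp add: ac_simps)
  ultimately show ?case using reach_trans[of P B] by (metis (no_types))
qed

lemma mergeN:
  "\<not> var_in y D \<Longrightarrow>
   reach P B (H, T + replicate_mset n (insert (Pos y) D) + replicate_mset n (insert (Neg y) D))
             (H, T + replicate_mset n D)"
proof (induction n arbitrary: T)
  case 0 then show ?case using reach_refl by simp
next
  case (Suc n)
  let ?X = "T + replicate_mset n (insert (Pos y) D) + replicate_mset n (insert (Neg y) D)"
  have a: "reach P B (H, ?X + {#insert (Pos y) D, insert (Neg y) D#}) (H, add_mset D ?X)"
    using Suc.prems by (intro reach_step step_d)
  have b: "reach P B (H, add_mset D T + replicate_mset n (insert (Pos y) D) + replicate_mset n (insert (Neg y) D))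
     (H, add_mset D T + replicate_mset n D)"
    using Suc by blast
  have e1: "T + replicate_mset (Suc n) (insert (Pos y) D) + replicate_mset (Suc n) (insert (Neg y) D)
     = ?X + {#insert (Pos y) D, insert (Neg y) D#}"
    by (simp add: ac_simps)
  have e2: "add_mset D ?X
     = add_mset D T + replicate_mset n (insert (Pos y) D) + replicate_mset n (insert (Neg y) D)" by simp
  have e3: "add_mset D T + replicate_mset n D = T + replicate_mset (Suc n) D" by simp
  have "reach P B (H, ?X + {#insert (Pos y) D, insert (Neg y) D#}) (H, add_mset D T + replicate_mset n D)"
    using reach_trans[OF a] b unfolding e2 by blast
  then show ?case unfolding e1 e3 .
qed

definition sl :: "('v \<Rightarrow> bool) \<Rightarrow> 'v \<Rightarrow> 'v lit" where
  "sl s z = (if s z then Neg z else Pos z)"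

definition full :: "'v clause \<Rightarrow> 'v list \<Rightarrow> ('v \<Rightarrow> bool) \<Rightarrow> 'v clause" where
  "full D ys s = D \<union> sl s ` set ys"

lemma full_upd:
  assumes "y \<notin> set ys"
  shows "full D (y # ys) (s(y := b)) = full (insert (sl (s(y:=b)) y) D) ys s"
proof -
  have "sl (s(y := b)) ` set ys = sl s ` set ys"
    using assms by (intro image_cong) (auto simp: sl_def)
  then show ?thesis unfolding full_def by auto
qed

lemma tree:
  "distinct ys \<Longrightarrow> \<forall>z\<in>set ys. \<not> var_in z D \<Longrightarrow>
   (\<forall>s. card {z\<in>set ys. s z} < n \<longrightarrow> full D ys s \<in># H) \<Longrightarrow>
   \<exists>R. reach P B (H, S0 + mset (map (\<lambda>z. insert (Neg z) D) ys)) (H, S0 + replicate_mset n D + R)"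
proof (induction ys arbitrary: D n S0)
  case Nil
  show ?case
  proof (cases "n = 0")
    case True then show ?thesis using reach_refl by (intro exI[of _ "{#}"]) simp
  next
    case False
    then have "D \<in># H" using Nil.prems(3)[rule_format, of "\<lambda>_. False"] by (simp add: full_def)
    then show ?thesis using addcopies[of D H P B S0 n] by (intro exI[of _ "{#}"]) simp
  qed
next
  case (Cons y ys)
  define D1 where "D1 = insert (Pos y) D"
  define D2 where "D2 = insert (Neg y) D"
  define A where "A = mset (map (\<lambda>z. insert (Neg z) D1) ys)"
  define Bm where "Bm = mset (map (\<lambda>z. insert (Neg z) D2) ys)"
  have y: "y \<notin> set ys" "distinct ys" "\<not> var_in y D" "\<forall>z\<in>set ys. \<not> var_in z D"
    using Cons.prems by auto
  have nv: "\<forall>z\<in>set ys. \<not> var_in y (insert (Neg z) D)"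
    using y unfolding var_in_def by auto
  have st1: "reach P B (H, S0 + mset (map (\<lambda>z. insert (Neg z) D) (y # ys)))
                 (H, S0 + {#D2#} + A + Bm)"
  proof -
    have "reach P B (H, (S0 + {#D2#}) + mset (map (\<lambda>z. insert (Neg z) D) ys))
       (H, (S0 + {#D2#}) + mset (map (\<lambda>z. insert (Pos y) (insert (Neg z) D)) ys)
             + mset (map (\<lambda>z. insert (Neg y) (insert (Neg z) D)) ys))"
      by (rule splitall[OF nv])
    moreover have "map (\<lambda>z. insert (Pos y) (insert (Neg z) D)) ys = map (\<lambda>z. insert (Neg z) D1) ys"
      unfolding D1_def by (simp add: insert_commute)
    moreover have "map (\<lambda>z. insert (Neg y) (insert (Neg z) D)) ys = map (\<lambda>z. insert (Neg z) D2) ys"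
      unfolding D2_def by (simp add: insert_commute)
    ultimately show ?thesis unfolding A_def Bm_def D2_def by simp
  qed
  have h1: "\<forall>s. card {z\<in>set ys. s z} < n \<longrightarrow> full D1 ys s \<in># H"
  proof (intro allI impI)
    fix s assume c: "card {z\<in>set ys. s z} < n"
    have "{z\<in>set (y#ys). (s(y:=False)) z} = {z\<in>set ys. s z}" using y(1) by auto
    then have "full D (y#ys) (s(y:=False)) \<in># H" using Cons.prems(3) c by metis
    then show "full D1 ys s \<in># H" using full_upd[OF y(1)] unfolding D1_def by (simp add: sl_def)
  qed
  have h2: "\<forall>s. card {z\<in>set ys. s z} < n - 1 \<longrightarrow> full D2 ys s \<in># H"
  proof (intro allI impI)
    fix s assume c: "card {z\<in>set ys. s z} < n - 1"
    have "{z\<in>set (y#ys). (s(y:=True)) z} = insert y {z\<in>set ys. s z}" using y(1) by auto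
    moreover have "card (insert y {z\<in>set ys. s z}) = Suc (card {z\<in>set ys. s z})"
      using y(1) by simp
    ultimately have "card {z\<in>set (y#ys). (s(y:=True)) z} < n" using c by simp
    then have "full D (y#ys) (s(y:=True)) \<in># H" using Cons.prems(3) by metis
    then show "full D2 ys s \<in># H" using full_upd[OF y(1)] unfolding D2_def by (simp add: sl_def)
  qed
  have d1: "\<forall>z\<in>set ys. \<not> var_in z D1" using y unfolding D1_def var_in_def by auto
  have d2: "\<forall>z\<in>set ys. \<not> var_in z D2" using y unfolding D2_def var_in_def by auto
  obtain R1 where r1: "reach P B (H, (S0 + {#D2#} + Bm) + A) (H, (S0 + {#D2#} + Bm) + replicate_mset n D1 + R1)"
    using Cons.IH[OF y(2) d1 h1, of "S0 + {#D2#} + Bm"] unfolding A_def by blast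
  obtain R2 where r2: "reach P B (H, (S0 + {#D2#} + replicate_mset n D1 + R1) + Bm)
      (H, (S0 + {#D2#} + replicate_mset n D1 + R1) + replicate_mset (n - 1) D2 + R2)"
    using Cons.IH[OF y(2) d2 h2, of "S0 + {#D2#} + replicate_mset n D1 + R1"] unfolding Bm_def by blast
  have r12: "reach P B (H, S0 + mset (map (\<lambda>z. insert (Neg z) D) (y # ys)))
      (H, (S0 + {#D2#} + replicate_mset n D1 + R1) + replicate_mset (n - 1) D2 + R2)"
    using reach_trans[OF st1 reach_trans[OF reach_eq2[OF r1] reach_eq2[OF r2]]]
    by (simp add: ac_simps)
  show ?case
  proof (cases n)
    case 0
    then show ?thesis using r12 by (intro exI[of _ "{#D2#} + R1 + R2"]) (simp add: ac_simps)
  next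
    case (Suc m)
    have "reach P B (H, (S0 + R1 + R2) + replicate_mset n (insert (Pos y) D) + replicate_mset n (insert (Neg y) D))
       (H, (S0 + R1 + R2) + replicate_mset n D)"
      by (rule mergeN[OF y(3)])
    then have "reach P B (H, S0 + mset (map (\<lambda>z. insert (Neg z) D) (y # ys)))
       (H, (S0 + R1 + R2) + replicate_mset n D)"
      using reach_trans[OF r12 reach_eq2] Suc unfolding D1_def D2_def by (simp add: ac_simps)
    then show ?thesis by (intro exI[of _ "R1 + R2"]) (simp add: ac_simps)
  qed
qed




theorem theorem7p2:
  fixes P :: redundancy and Cs :: "'v clause list" and bs :: "'v list" and k :: nat
  assumes "length Cs = length bs"
    and "distinct bs"
    and "\<forall>C\<in>set Cs. finite C"
    and "\<forall>C\<in>set Cs. \<forall>l\<in>C. var l \<notin> set bs"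
    and "\<exists>\<alpha>. sat_set \<alpha> (set_mset (hard0 Cs bs))"
    and "cost_set (set bs) (set_mset (hard0 Cs bs)) = k"
  shows "\<exists>ds. is_derivation P (set bs) ds \<and> hd ds = (hard0 Cs bs, soft0 bs)
             \<and> replicate_mset k {} \<subseteq># snd (last ds)"
proof -
  define F where "F = set_mset (hard0 Cs bs)"
  define Q where "Q = {full {} bs s | s. card {z\<in>set bs. s z} < k}"
  have fF: "finite F" unfolding F_def by simp
  have fC: "\<forall>C\<in>F. finite C"
  proof
    fix C assume "C \<in> F"
    then obtain c b where cb: "(c,b) \<in> set (zip Cs bs)" "C = insert (Pos b) c"
      unfolding F_def hard0_def by auto
    then have "c \<in> set Cs" by (meson set_zip_leftD)
    then show "finite C" using cb(2) assms(3) by simp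
  qed
  have fQ: "finite Q"
  proof (rule finite_subset)
    show "Q \<subseteq> Pow (Pos ` set bs \<union> Neg ` set bs)"
      unfolding Q_def full_def sl_def by auto
  qed simp
  have QD: "\<forall>D\<in>Q. finite D \<and> (\<exists>C. der F C \<and> C \<subseteq> D)"
  proof
    fix D assume "D \<in> Q"
    then obtain s where s: "D = full {} bs s" "card {z\<in>set bs. s z} < k" unfolding Q_def by blast
    have fD: "finite D" unfolding s full_def by simp
    have nt: "\<not> tautology D"
    proof
      assume "tautology D"
      then obtain x where "Pos x \<in> D" "Neg x \<in> D" unfolding tautology_def by blast
      then show False unfolding s full_def sl_def by (auto split: if_splits)
    qed
    have imp: "\<forall>\<alpha>. sat_set \<alpha> F \<longrightarrow> sat_clause \<alpha> D"
    proof (intro allI impI)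
      fix \<alpha> assume sa: "sat_set \<alpha> F"
      show "sat_clause \<alpha> D"
      proof (rule ccontr)
        assume ns: "\<not> sat_clause \<alpha> D"
        have "\<forall>z\<in>set bs. \<alpha> z = s z"
        proof
          fix z assume z: "z \<in> set bs"
          then have "sl s z \<in> D" unfolding s full_def by simp
          then have "\<not> lit_val \<alpha> (sl s z)" using ns unfolding sat_clause_def by blast
          then show "\<alpha> z = s z" unfolding sl_def by (cases "s z") auto
        qed
        then have "{b\<in>set bs. \<alpha> b} = {z\<in>set bs. s z}" by auto
        then have c: "cost (set bs) \<alpha> < k" unfolding cost_def using s(2) by simp
        have "k \<le> cost (set bs) \<alpha>"
          using assms(6) sa unfolding cost_set_def F_def by (metis (mono_tags, lifting) Least_le)
        then show False using c by simp
      qed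
    qed
    show "finite D \<and> (\<exists>C. der F C \<and> C \<subseteq> D)" using fD complete[OF fF fC nt imp] by blast
  qed
  obtain H' where H': "reach P (set bs) (hard0 Cs bs, soft0 bs) (H', soft0 bs)" "\<forall>D\<in>Q. D \<in># H'"
    using getQ[OF fQ QD, of "hard0 Cs bs" P "set bs" "soft0 bs"] unfolding F_def by blast
  have hyp: "\<forall>s. card {z\<in>set bs. s z} < k \<longrightarrow> full {} bs s \<in># H'"
    using H'(2) unfolding Q_def by blast
  have "\<exists>R. reach P (set bs) (H', {#} + mset (map (\<lambda>z. insert (Neg z) {}) bs))
     (H', {#} + replicate_mset k {} + R)"
    by (rule tree[OF assms(2) _ hyp]) (simp add: var_in_def)
  then obtain R where R: "reach P (set bs) (H', {#} + mset (map (\<lambda>z. insert (Neg z) {}) bs))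
     (H', {#} + replicate_mset k {} + R)" by blast
  have "mset (map (\<lambda>z. insert (Neg z) {}) bs) = soft0 bs" unfolding soft0_def by simp
  then have "reach P (set bs) (hard0 Cs bs, soft0 bs) (H', replicate_mset k {} + R)"
    using reach_trans[OF H'(1)] R by simp
  then obtain ds where "is_derivation P (set bs) ds" "hd ds = (hard0 Cs bs, soft0 bs)"
    "last ds = (H', replicate_mset k {} + R)" using reach_list by blast
  then show ?thesis by (intro exI[of _ ds]) simp
qed


end
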